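(* Let $G$ be a connected finite simple graph of order $p$ and size $q$, with normal graph algebra $\mathcal{N}G$ over a field $\mathbb{F}$ of characteristic not $2$, such that every set of two distinct edges of $G$ is the support of $u^2$ for some $u\in U_G$. Suppose also that $G$ is not edge-square. Then $p\ge4$, $q=p$ or $q=p+1$, and: (1) if $q=p$, then $G$ is an even cycle and $\mathcal{N}G$ is isomorphic to $\mathbb{F}^0\oplus\mathcal{T}_{p-1}$; (2) if $q=p+1$, then $\mathcal{N}G$ is isomorphic to $\mathcal{T}_p$.
   Context: A normal algebra is a finite-dimensional $\mathbb{F}$-vector space $U\oplus\mathfrak{Z}$ with commutative bilinear product satisfying $U\mathfrak{Z}=0$, $\mathfrak{Z}\mathfrak{Z}=0$, $UU\subseteq\mathfrak{Z}$; isomorphisms are product-preserving linear bijections respecting the $U$- and $\mathfrak{Z}$-parts; direct sums are componentwise. For a finite simple graph $G$ with vertex set $VG$ and edge set $EG$, $\mathcal{N}G$ has $U_G$ with basis $VG$ and $\mathfrak{Z}_G$ with basis $EG$ (edge with endpoints $x,y$ written $[x,y]$), product determined by: for distinct vertices $x,y$, $xy=[x,y]$ if adjacent and $0$ otherwise; $x^2=\sum_{y\sim x}[x,y]$. The support of $\mathfrak{z}\in\mathfrak{Z}_G$ is the set of edges with nonzero coefficient in $\mathfrak{z}$. $G$ is edge-square if for every edge $\mathfrak{e}$ there is $u\in U_G$ with $u^2=\mathfrak{e}$. $\mathbb{F}^0$ is the normal algebra with $U=\mathbb{F}$, $\mathfrak{Z}=0$, all products $0$. $\mathcal{T}_n$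 is the normal algebra with $U$-basis $w_1,\dots,w_n$, $\mathfrak{Z}$-basis $\mathfrak{z}_0,\dots,\mathfrak{z}_n$, products $w_iw_j=\mathfrak{z}_0+\delta_{ij}\mathfrak{z}_i$ ($1\le i,j\le n$), all other basis products $0$. *)

theory Defs
  imports Main
begin

text \<open>A normal algebra over a field 'f is given by a finite basis I of U, a finite basis J
of Z, and structure constants sc i k j: the coefficient of the Z-basis vector j in the
product of the U-basis vectors i and k.  Products U Z and Z Z are zero, so the algebra
is determined by the bilinear map U x U -> Z.\<close>

record ('i, 'j, 'f) nalg =
  ubasis :: "'i set"
  zbasis :: "'j set"
  sc :: "'i \<Rightarrow> 'i \<Rightarrow> 'j \<Rightarrow> 'f"

definition Uvec :: "('i, 'j, 'f::field) nalg \<Rightarrow> ('i \<Rightarrow> 'f) set" where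
  "Uvec A = {u. \<forall>i. i \<notin> ubasis A \<longrightarrow> u i = 0}"

definition Zvec :: "('i, 'j, 'f::field) nalg \<Rightarrow> ('j \<Rightarrow> 'f) set" where
  "Zvec A = {z. \<forall>j. j \<notin> zbasis A \<longrightarrow> z j = 0}"

definition nprod :: "('i, 'j, 'f::field) nalg \<Rightarrow> ('i \<Rightarrow> 'f) \<Rightarrow> ('i \<Rightarrow> 'f) \<Rightarrow> ('j \<Rightarrow> 'f)" where
  "nprod A u v = (\<lambda>j. if j \<in> zbasis A then
      (\<Sum>i\<in>ubasis A. \<Sum>k\<in>ubasis A. u i * v k * sc A i k j) else 0)"

definition linear_on :: "('a \<Rightarrow> 'f::field) set \<Rightarrow> (('a \<Rightarrow> 'f) \<Rightarrow> ('b \<Rightarrow> 'f)) \<Rightarrow> bool" where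
  "linear_on S f \<longleftrightarrow>
     (\<forall>u\<in>S. \<forall>v\<in>S. f (\<lambda>i. u i + v i) = (\<lambda>i. f u i + f v i)) \<and>
     (\<forall>c. \<forall>u\<in>S. f (\<lambda>i. c * u i) = (\<lambda>i. c * f u i))"

definition nalg_iso :: "('i, 'j, 'f::field) nalg \<Rightarrow> ('i2, 'j2, 'f) nalg \<Rightarrow> bool" where
  "nalg_iso A B \<longleftrightarrow> (\<exists>\<phi> \<psi>.
      linear_on (Uvec A) \<phi> \<and> bij_betw \<phi> (Uvec A) (Uvec B) \<and>
      linear_on (Zvec A) \<psi> \<and> bij_betw \<psi> (Zvec A) (Zvec B) \<and>
      (\<forall>u\<in>Uvec A. \<forall>v\<in>Uvec A. \<psi> (nprod A u v) = nprod B (\<phi> u) (\<phi> v)))"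

definition nalg_sum :: "('i, 'j, 'f::field) nalg \<Rightarrow> ('i2, 'j2, 'f) nalg
    \<Rightarrow> ('i + 'i2, 'j + 'j2, 'f) nalg" where
  "nalg_sum A B = \<lparr> ubasis = Inl ` ubasis A \<union> Inr ` ubasis B,
     zbasis = Inl ` zbasis A \<union> Inr ` zbasis B,
     sc = (\<lambda>x y z. case (x, y, z) of
             (Inl i, Inl k, Inl j) \<Rightarrow> sc A i k j
           | (Inr i, Inr k, Inr j) \<Rightarrow> sc B i k j
           | _ \<Rightarrow> 0) \<rparr>"

definition F0 :: "(unit, nat, 'f::field) nalg" where
  "F0 = \<lparr> ubasis = UNIV, zbasis = {}, sc = (\<lambda>_ _ _. 0) \<rparr>"

text \<open>T_n: U-basis w_1..w_n, Z-basis z_0..z_n, w_i w_k = z_0 + delta_ik z_i.\<close>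

definition T_alg :: "nat \<Rightarrow> (nat, nat, 'f::field) nalg" where
  "T_alg n = \<lparr> ubasis = {1..n}, zbasis = {0..n},
     sc = (\<lambda>i k j. if i \<in> {1..n} \<and> k \<in> {1..n} then
             (if j = 0 then 1 else if j = i \<and> i = k then 1 else 0) else 0) \<rparr>"

definition simple_graph :: "'a set \<Rightarrow> 'a set set \<Rightarrow> bool" where
  "simple_graph V E \<longleftrightarrow> finite V \<and> (\<forall>e\<in>E. e \<subseteq> V \<and> card e = 2)"

definition adj :: "'a set set \<Rightarrow> 'a \<Rightarrow> 'a \<Rightarrow> bool" where
  "adj E x y \<longleftrightarrow> x \<noteq> y \<and> {x, y} \<in> E"

definition connected_graph :: "'a set \<Rightarrow> 'a set set \<Rightarrow> bool" where
  "connected_graph V E \<longleftrightarrow> (\<forall>x\<in>V. \<forall>y\<in>V. (adj E)\<^sup>*\<^sup>* x y)"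

definition is_cycle :: "'a set \<Rightarrow> 'a set set \<Rightarrow> bool" where
  "is_cycle V E \<longleftrightarrow> card V \<ge> 3 \<and>
     (\<exists>f. bij_betw f {0..<card V} V \<and>
          E = {{f i, f (Suc i mod card V)} | i. i < card V})"

definition is_even_cycle :: "'a set \<Rightarrow> 'a set set \<Rightarrow> bool" where
  "is_even_cycle V E \<longleftrightarrow> is_cycle V E \<and> even (card V)"

text \<open>The normal graph algebra NG: U-basis VG, Z-basis EG; for distinct x y,
x y = [x,y] if adjacent, else 0; x^2 = sum of the edges at x.\<close>

definition NG :: "'a set \<Rightarrow> 'a set set \<Rightarrow> ('a, 'a set, 'f::field) nalg" where
  "NG V E = \<lparr> ubasis = V, zbasis = E,
     sc = (\<lambda>x y e. if e \<in> E \<and> x \<in> V \<and> y \<in> V \<and>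
                      (if x = y then x \<in> e else e = {x, y}) then 1 else 0) \<rparr>"

definition zsupport :: "'a set set \<Rightarrow> ('a set \<Rightarrow> 'f::field) \<Rightarrow> 'a set set" where
  "zsupport E z = {e \<in> E. z e \<noteq> 0}"

definition edge_square :: "'a set \<Rightarrow> 'a set set \<Rightarrow> 'f::field itself \<Rightarrow> bool" where
  "edge_square V E (_::'f itself) \<longleftrightarrow>
     (\<forall>e\<in>E. \<exists>u \<in> Uvec (NG V E :: ('a, 'a set, 'f) nalg).
         nprod (NG V E) u u = (\<lambda>e'. if e' = e then 1 else 0))"

end

theory Submission
  imports Defs "HOL-Library.Function_Algebras" HOL.Vector_Spaces
begin

definition scl :: "'f::field \<Rightarrow> ('x \<Rightarrow> 'f) \<Rightarrow> ('x \<Rightarrow> 'f)" where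
  "scl c f = (\<lambda>i. c * f i)"

interpretation fvs: vector_space "scl :: 'f::field \<Rightarrow> ('x \<Rightarrow> 'f) \<Rightarrow> _"
  by unfold_locales (auto simp: scl_def fun_eq_iff algebra_simps)

lemma sum_fun_app: "(sum f A) x = (\<Sum>a\<in>A. f a x)"
  by (induction A rule: infinite_finite_induct) auto

lemma scl_app[simp]: "scl c f x = c * f x" by (simp add: scl_def)

definition lf :: "'a set set \<Rightarrow> ('a \<Rightarrow> 'f::field) \<Rightarrow> ('a set \<Rightarrow> 'f)" where
  "lf E a = (\<lambda>e. if e \<in> E then (\<Sum>x\<in>e. a x) else 0)"

lemma lf_add: "lf E (a + b) = lf E a + lf E b"
  by (auto simp: lf_def fun_eq_iff sum.distrib)
lemma lf_add': "lf E (\<lambda>i. a i + b i) = (\<lambda>i. lf E a i + lf E b i)"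
  by (auto simp: lf_def fun_eq_iff sum.distrib)
lemma lf_diff: "lf E (a - b) = lf E a - lf E b"
  by (auto simp: lf_def fun_eq_iff sum_subtractf)
lemma lf_scl: "lf E (scl c a) = scl c (lf E a)"
  by (auto simp: lf_def fun_eq_iff sum_distrib_left)
lemma lf_scl': "lf E (\<lambda>i. c * a i) = (\<lambda>i. c * lf E a i)"
  by (auto simp: lf_def fun_eq_iff sum_distrib_left)
lemma lf_zero[simp]: "lf E 0 = 0"
  by (auto simp: lf_def fun_eq_iff)
lemma lf_sum: "lf E (\<Sum>i\<in>I. f i) = (\<Sum>i\<in>I. lf E (f i))"
proof (induction I rule: infinite_finite_induct)
  case (insert x F)
  have "sum f (insert x F) = f x + sum f F" using insert(1,2) by (rule sum.insert)
  then have "lf E (sum f (insert x F)) = lf E (f x) + lf E (sum f F)" by (simp only: lf_add)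
  moreover have "(\<Sum>i\<in>insert x F. lf E (f i)) = lf E (f x) + (\<Sum>i\<in>F. lf E (f i))"
    by (rule sum.insert[OF insert(1,2)])
  ultimately show ?case using insert(3) by simp
qed (simp_all add: lf_def fun_eq_iff)

lemma lf_linear: "Vector_Spaces.linear scl scl (lf E)"
  unfolding module_hom_iff_linear[symmetric] module_hom_def module_hom_axioms_def module_iff_vector_space
  by (auto simp: lf_add lf_scl fvs.vector_space_axioms)

lemma card2_cond:
  assumes "card e = 2"
  shows "(if i = k then i \<in> e else e = {i, k}) \<longleftrightarrow> (i \<in> e \<and> k \<in> e)"
  using assms by (auto simp: card_2_iff)

lemma nprod_NG:
  assumes "simple_graph V E"
  shows "nprod (NG V E :: ('a, 'a set, 'f::field) nalg) a b = (\<lambda>e. lf E a e * lf E b e)"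
proof
  fix e
  show "nprod (NG V E :: ('a, 'a set, 'f::field) nalg) a b e = lf E a e * lf E b e"
  proof (cases "e \<in> E")
    case True
    then have c2: "card e = 2" and eV: "e \<subseteq> V" and fin: "finite V"
      using assms by (auto simp: simple_graph_def)
    have fe: "finite e" using c2 card.infinite by fastforce
    have "nprod (NG V E :: ('a, 'a set, 'f::field) nalg) a b e =
       (\<Sum>i\<in>V. \<Sum>k\<in>V. a i * b k * (if (if i = k then i \<in> e else e = {i, k}) then 1 else 0))"
      using True by (simp add: nprod_def NG_def)
    also have "\<dots> = (\<Sum>i\<in>V. \<Sum>k\<in>V. if i \<in> e \<and> k \<in> e then a i * b k else 0)"
      by (intro sum.cong refl) (simp add: card2_cond[OF c2])
    also have "\<dots> = (\<Sum>i\<in>V. if i \<in> e then (\<Sum>k\<in>V. if k \<in> e then a i * b k else 0) else 0)"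
      by (rule sum.cong) auto
    also have "\<dots> = (\<Sum>i\<in>e. (\<Sum>k\<in>e. a i * b k))"
      using fin eV by (simp add: sum.If_cases Int_absorb1 Int_absorb2 inf_commute)
    also have "\<dots> = lf E a e * lf E b e"
      using True by (simp add: lf_def sum_product)
    finally show ?thesis .
  qed (simp add: nprod_def NG_def lf_def)
qed


lemma Uvec_NG: "Uvec (NG V E) = {u. \<forall>i. i \<notin> V \<longrightarrow> u i = 0}"
  by (simp add: Uvec_def NG_def)
lemma Zvec_NG: "Zvec (NG V E) = {u. \<forall>i. i \<notin> E \<longrightarrow> u i = 0}"
  by (simp add: Zvec_def NG_def)

definition dl :: "'x \<Rightarrow> 'x \<Rightarrow> 'f::field" where "dl x = (\<lambda>y. if y = x then 1 else 0)"

locale ctx =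
  fixes V :: "'a set" and E :: "'a set set" and TT :: "'f::field itself"
  assumes graph: "simple_graph V E"
    and conn: "connected_graph V E"
    and char: "(2::'f) \<noteq> 0"
    and pairs: "\<forall>e1\<in>E. \<forall>e2\<in>E. e1 \<noteq> e2 \<longrightarrow>
        (\<exists>u \<in> Uvec (NG V E :: ('a, 'a set, 'f) nalg).
            zsupport E (nprod (NG V E :: ('a, 'a set, 'f) nalg) u u) = {e1, e2})"
    and not_sq: "\<not> edge_square V E TYPE('f)"
begin

abbreviation UV :: "('a \<Rightarrow> 'f) set" where "UV \<equiv> {u. \<forall>i. i \<notin> V \<longrightarrow> u i = 0}"
abbreviation ZV :: "('a set \<Rightarrow> 'f) set" where "ZV \<equiv> {u. \<forall>i. i \<notin> E \<longrightarrow> u i = 0}"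
abbreviation L :: "('a \<Rightarrow> 'f) \<Rightarrow> ('a set \<Rightarrow> 'f)" where "L \<equiv> lf E"

lemma finV: "finite V" using graph by (simp add: simple_graph_def)
lemma edge: "e \<in> E \<Longrightarrow> card e = 2 \<and> e \<subseteq> V" using graph by (simp add: simple_graph_def)
lemma edge_fin: "e \<in> E \<Longrightarrow> finite e" using edge card.infinite by fastforce
lemma finE: "finite E"
proof -
  have "E \<subseteq> Pow V" using edge by auto
  then show ?thesis using finV finite_subset by blast
qed

lemma sq: "nprod (NG V E :: ('a, 'a set, 'f) nalg) u v = (\<lambda>e. L u e * L v e)"
  using nprod_NG[OF graph] by blast

lemma L_out: "e \<notin> E \<Longrightarrow> L a e = 0" by (simp add: lf_def)
lemma L_ZV: "L a \<in> ZV" by (simp add: lf_def)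

lemma UV_add: "a \<in> UV \<Longrightarrow> b \<in> UV \<Longrightarrow> a + b \<in> UV" by simp
lemma UV_diff: "a \<in> UV \<Longrightarrow> b \<in> UV \<Longrightarrow> a - b \<in> UV" by simp
lemma UV_scl: "a \<in> UV \<Longrightarrow> scl c a \<in> UV" by simp
lemma UV_sum: "(\<And>i. i \<in> I \<Longrightarrow> f i \<in> UV) \<Longrightarrow> sum f I \<in> UV"
  by (simp add: sum_fun_app)
lemma dl_UV: "x \<in> V \<Longrightarrow> dl x \<in> UV" by (auto simp: dl_def)

lemma L_dl: "L (dl x) e = (if e \<in> E \<and> x \<in> e then 1 else 0)"
  using edge_fin by (auto simp: lf_def dl_def)

lemma L_pair: "{x, y} \<in> E \<Longrightarrow> x \<noteq> y \<Longrightarrow> L a {x, y} = a x + a y"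
  by (simp add: lf_def)

definition goodE :: "'a set \<Rightarrow> bool" where
  "goodE e \<longleftrightarrow> e \<in> E \<and> (\<forall>u\<in>UV. \<not> (L u e \<noteq> 0 \<and> (\<forall>e'\<in>E. e' \<noteq> e \<longrightarrow> L u e' = 0)))"

lemma ex_goodE: "\<exists>e. goodE e"
proof -
  from not_sq obtain e where eE: "e \<in> E" and
    nu: "\<not> (\<exists>u \<in> Uvec (NG V E :: ('a, 'a set, 'f) nalg).
         nprod (NG V E) u u = (\<lambda>e'. if e' = e then (1::'f) else 0))"
    unfolding edge_square_def by blast
  have "goodE e"
    unfolding goodE_def
  proof (intro conjI eE ballI notI)
    fix u assume u: "u \<in> UV" and h: "L u e \<noteq> 0 \<and> (\<forall>e'\<in>E. e' \<noteq> e \<longrightarrow> L u e' = 0)"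
    define c where "c = L u e"
    have c: "c \<noteq> 0" using h c_def by simp
    define u' where "u' = scl (1/c) u"
    have u': "u' \<in> Uvec (NG V E :: ('a, 'a set, 'f) nalg)" using u by (simp add: Uvec_NG u'_def)
    have "nprod (NG V E) u' u' = (\<lambda>e'. if e' = e then (1::'f) else 0)"
    proof
      fix e'
      have "L u' e' = (1/c) * L u e'" by (simp add: u'_def lf_scl)
      then show "nprod (NG V E) u' u' e' = (if e' = e then (1::'f) else 0)"
        using h c c_def L_out[of e' u] eE by (auto simp: sq)
    qed
    then show False using nu u' by blast
  qed
  then show ?thesis ..
qed

definition e0 :: "'a set" where "e0 = (SOME e. goodE e)"

lemma e0: "goodE e0" unfolding e0_def using ex_goodE someI_ex by metis
lemma e0E: "e0 \<in> E" using e0 goodE_def by blast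
lemma e0_nosq: "u \<in> UV \<Longrightarrow> (\<forall>e'\<in>E. e' \<noteq> e0 \<longrightarrow> L u e' = 0) \<Longrightarrow> L u e0 = 0"
  using e0 goodE_def by blast

definition vprop :: "'a set \<Rightarrow> ('a \<Rightarrow> 'f) \<Rightarrow> bool" where
  "vprop e v \<longleftrightarrow> v \<in> UV \<and> L v e = 1 \<and> (\<forall>e'\<in>E. e' \<noteq> e \<and> e' \<noteq> e0 \<longrightarrow> L v e' = 0) \<and> L v e0 \<noteq> 0"

lemma ex_vprop: assumes "e \<in> E" "e \<noteq> e0" shows "\<exists>v. vprop e v"
proof -
  obtain u where u: "u \<in> UV" and supp: "zsupport E (nprod (NG V E :: ('a, 'a set, 'f) nalg) u u) = {e0, e}"
  proof -
    have "e0 \<noteq> e" using assms by simp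
    then obtain u where "u \<in> Uvec (NG V E :: ('a, 'a set, 'f) nalg)"
      "zsupport E (nprod (NG V E :: ('a, 'a set, 'f) nalg) u u) = {e0, e}"
      using pairs e0E assms(1) by blast
    then show ?thesis using that by (simp add: Uvec_NG)
  qed
  have S: "{e'\<in>E. L u e' * L u e' \<noteq> 0} = {e0, e}" using supp by (simp add: zsupport_def sq)
  have a1: "L u e \<noteq> 0"
  proof -
    have "e \<in> {e'\<in>E. L u e' * L u e' \<noteq> 0}" using S by (simp only: insert_iff) simp
    then show ?thesis by simp
  qed
  have a2: "L u e0 \<noteq> 0"
  proof -
    have "e0 \<in> {e'\<in>E. L u e' * L u e' \<noteq> 0}" using S by (simp only: insert_iff) simp
    then show ?thesis by simp
  qed
  have b: "\<forall>e'\<in>E. e' \<noteq> e \<and> e' \<noteq> e0 \<longrightarrow> L u e' = 0"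
  proof (intro ballI impI)
    fix e' assume "e' \<in> E" "e' \<noteq> e \<and> e' \<noteq> e0"
    then have "e' \<notin> {e'\<in>E. L u e' * L u e' \<noteq> 0}" using S by simp
    then show "L u e' = 0" using \<open>e' \<in> E\<close> by simp
  qed
  define v where "v = scl (1 / L u e) u"
  have "L v = scl (1 / L u e) (L u)" by (simp add: v_def lf_scl)
  then have "vprop e v" unfolding vprop_def using a1 a2 b u by (simp add: v_def)
  then show ?thesis by blast
qed

definition vv :: "'a set \<Rightarrow> ('a \<Rightarrow> 'f)" where "vv e = (SOME v. vprop e v)"

lemma vv: assumes "e \<in> E" "e \<noteq> e0" shows "vprop e (vv e)"
  unfolding vv_def using ex_vprop[OF assms] someI_ex by metis

definition zz :: "'a set \<Rightarrow> 'f" where "zz e = (if e = e0 then 1 else - L (vv e) e0)"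


lemma zz_nz: "e \<in> E \<Longrightarrow> zz e \<noteq> 0"
proof (cases "e = e0")
  case False
  assume "e \<in> E"
  then have "vprop e (vv e)" using vv False by blast
  then show ?thesis using False by (simp add: zz_def vprop_def)
qed (simp add: zz_def)

lemma vv_coord: "e \<in> (E - {e0}) \<Longrightarrow> e' \<in> (E - {e0}) \<Longrightarrow> L (vv e) e' = (if e' = e then 1 else 0)"
  using vv[of e] by (auto simp: vprop_def)

lemma vv_UV: "e \<in> (E - {e0}) \<Longrightarrow> vv e \<in> UV"
  using vv[of e] by (auto simp: vprop_def)

definition pre :: "('a set \<Rightarrow> 'f) \<Rightarrow> ('a \<Rightarrow> 'f)" where
  "pre w = (\<Sum>e\<in>(E - {e0}). scl (w e) (vv e))"

lemma pre_UV: "pre w \<in> UV"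
  unfolding pre_def by (rule UV_sum) (use vv_UV in auto)

lemma key:
  assumes w: "w \<in> ZV"
  shows "w - L (pre w) = (\<lambda>e'. if e' = e0 then (\<Sum>e\<in>E. zz e * w e) else 0)"
proof
  fix e'
  have Lp: "L (pre w) e' = (\<Sum>e\<in>(E - {e0}). w e * L (vv e) e')"
    by (simp add: pre_def lf_sum lf_scl sum_fun_app)
  have fE': "finite (E - {e0})" using finE by simp
  show "(w - L (pre w)) e' = (if e' = e0 then (\<Sum>e\<in>E. zz e * w e) else 0)"
  proof (cases "e' \<in> (E - {e0})")
    case True
    have "(\<Sum>e\<in>(E - {e0}). w e * L (vv e) e') = (\<Sum>e\<in>(E - {e0}). if e = e' then w e else 0)"
    proof (rule sum.cong[OF refl])
      fix e assume e: "e \<in> E - {e0}"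
      show "w e * L (vv e) e' = (if e = e' then w e else 0)" using vv_coord[OF e True] by auto
    qed
    also have "\<dots> = w e'" using True fE' by (simp add: sum.delta')
    finally show ?thesis using True Lp by auto
  next
    case False
    show ?thesis
    proof (cases "e' = e0")
      case True
      have "(\<Sum>e\<in>E. zz e * w e) = zz e0 * w e0 + (\<Sum>e\<in>(E - {e0}). zz e * w e)"
        using e0E finE by (simp add: sum.remove)
      also have "\<dots> = w e0 - (\<Sum>e\<in>(E - {e0}). w e * L (vv e) e0)"
      proof -
        have "(\<Sum>e\<in>(E - {e0}). zz e * w e) = (\<Sum>e\<in>(E - {e0}). - (w e * L (vv e) e0))"
          by (rule sum.cong) (auto simp: zz_def)
        then show ?thesis by (simp add: zz_def sum_negf)
      qed
      finally show ?thesis using True Lp by simp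
    next
      case False2: False
      then have "e' \<notin> E" using False by blast
      then show ?thesis using w False2 by (simp add: L_out)
    qed
  qed
qed

lemma H_sub: "w \<in> ZV \<Longrightarrow> (\<Sum>e\<in>E. zz e * w e) = 0 \<Longrightarrow> L (pre w) = w"
proof -
  assume a: "w \<in> ZV" "(\<Sum>e\<in>E. zz e * w e) = 0"
  have "\<forall>x. w x - L (pre w) x = 0" using key[OF a(1)] a(2) by (simp add: fun_eq_iff)
  then show ?thesis by (simp add: fun_eq_iff)
qed

lemma Im_sub: assumes a: "a \<in> UV" shows "(\<Sum>e\<in>E. zz e * L a e) = 0"
proof -
  define b where "b = a - pre (L a)"
  have b: "b \<in> UV" using a pre_UV by (simp add: b_def)
  have Lb: "L b = (\<lambda>e'. if e' = e0 then (\<Sum>e\<in>E. zz e * L a e) else 0)"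
    using key[OF L_ZV, of a] by (simp add: b_def lf_diff)
  have "L b e0 = 0" using e0_nosq[OF b] Lb by simp
  then show ?thesis using Lb by simp
qed

lemma vertex_sum: "x \<in> V \<Longrightarrow> (\<Sum>e\<in>{e\<in>E. x \<in> e}. zz e) = 0"
proof -
  assume x: "x \<in> V"
  have "(\<Sum>e\<in>E. zz e * L (dl x) e) = 0" using Im_sub dl_UV[OF x] by blast
  moreover have "(\<Sum>e\<in>E. zz e * L (dl x) e) = (\<Sum>e\<in>E. if x \<in> e then zz e else 0)"
    by (rule sum.cong) (auto simp: L_dl)
  ultimately show ?thesis using finE by (simp add: sum.inter_filter)
qed

end

lemma indep_coord:
  assumes "\<forall>w\<in>S. \<exists>k. \<forall>w'\<in>S. w' k = (if w' = w then (1::'f::field) else 0)"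
  shows "fvs.independent (S :: ('x \<Rightarrow> 'f) set)"
  unfolding fvs.independent_explicit_module
proof (intro allI impI)
  fix t u v
  assume h1: "finite t" and h2: "t \<subseteq> S" and h3: "(\<Sum>v\<in>t. scl (u v) v) = 0" and h4: "v \<in> t"
  note h = h1 h2 h3 h4
  then obtain k where k: "\<forall>w'\<in>S. w' k = (if w' = v then 1 else 0)" using assms by blast
  have "0 = (\<Sum>w\<in>t. scl (u w) w) k" using h by simp
  also have "\<dots> = (\<Sum>w\<in>t. if w = v then u w else 0)"
    unfolding sum_fun_app
  proof (rule sum.cong[OF refl])
    fix w assume "w \<in> t"
    then have "w \<in> S" using h2 by blast
    then show "scl (u w) w k = (if w = v then u w else 0)" using k by (cases "w = v") auto
  qed
  also have "\<dots> = u v" using h by (simp add: sum.delta')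
  finally show "u v = 0" by simp
qed

lemma span_comb: "(\<And>i. i \<in> I \<Longrightarrow> f i \<in> T) \<Longrightarrow> (\<Sum>i\<in>I. scl (c i) (f i)) \<in> fvs.span T"
  by (intro fvs.span_sum fvs.span_scale fvs.span_base) auto

lemma dl_app: "dl x y = (if y = x then 1 else 0)" by (simp add: dl_def)

lemma expand_dl:
  assumes "finite A" "\<forall>x. x \<notin> A \<longrightarrow> a x = 0"
  shows "a = (\<Sum>x\<in>A. scl (a x) (dl x))"
proof
  fix y
  show "a y = (\<Sum>x\<in>A. scl (a x) (dl x)) y"
  proof -
    have "(\<Sum>x\<in>A. scl (a x) (dl x)) y = (\<Sum>x\<in>A. if y = x then a x else 0)"
      unfolding sum_fun_app by (rule sum.cong) (auto simp: dl_app)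
    also have "\<dots> = a y" using assms by (simp add: sum.delta)
    finally show ?thesis by simp
  qed
qed

lemma hom_L: "module_hom scl scl (lf E)"
  using lf_linear module_hom_iff_linear by blast

context ctx begin

lemma adjD: "adj E x y \<Longrightarrow> x \<in> V \<and> y \<in> V \<and> {x, y} \<in> E \<and> x \<noteq> y"
  using edge by (auto simp: adj_def)

lemma ker_adj: "L a = 0 \<Longrightarrow> adj E x y \<Longrightarrow> a y = - a x"
proof -
  assume "L a = 0" "adj E x y"
  then have "a x + a y = 0" using L_pair[of x y a] adjD by (metis zero_fun_apply)
  then show ?thesis by (simp add: eq_neg_iff_add_eq_0 add.commute)
qed

lemma ker_zero:
  assumes La: "L a = 0" and a: "a \<in> UV" and y0: "y0 \<in> V" and z: "a y0 = 0"
  shows "a = 0"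
proof
  fix y
  show "a y = 0 y"
  proof (cases "y \<in> V")
    case True
    then have "(adj E)\<^sup>*\<^sup>* y0 y" using conn y0 by (simp add: connected_graph_def)
    then show ?thesis
    proof (induction rule: rtranclp_induct)
      case base then show ?case using z by simp
    next
      case (step y w) then show ?case using ker_adj[OF La, of y w] by simp
    qed
  qed (use a in simp)
qed

lemma V_two: "\<exists>x y. x \<in> V \<and> y \<in> V \<and> x \<noteq> y"
  using edge[OF e0E] by (auto simp: card_2_iff)

lemma has_nb: assumes x: "x \<in> V" shows "\<exists>y. adj E x y"
proof -
  obtain y where y: "y \<in> V" "y \<noteq> x" using V_two by blast
  then have "(adj E)\<^sup>*\<^sup>* x y" using conn x by (simp add: connected_graph_def)
  then show ?thesis using y(2) by (cases rule: converse_rtranclpE) auto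
qed

lemma deg_ge2: assumes x: "x \<in> V" shows "2 \<le> card {e\<in>E. x \<in> e}"
proof (rule ccontr)
  assume "\<not> 2 \<le> card {e\<in>E. x \<in> e}"
  then have c: "card {e\<in>E. x \<in> e} = 0 \<or> card {e\<in>E. x \<in> e} = 1" by auto
  have fin: "finite {e\<in>E. x \<in> e}" using finE by simp
  obtain y where "adj E x y" using has_nb[OF x] by blast
  then have ne: "{x, y} \<in> {e\<in>E. x \<in> e}" using adjD by blast
  show False
  proof (cases "card {e\<in>E. x \<in> e} = 0")
    case True then show False using fin ne by auto
  next
    case False
    then have "card {e\<in>E. x \<in> e} = 1" using c by linarith
    then obtain e where e: "{e\<in>E. x \<in> e} = {e}" using card_1_singletonE by blast
    have "(\<Sum>e\<in>{e\<in>E. x \<in> e}. zz e) = zz e" using e by simp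
    moreover have "e \<in> E" using e by blast
    ultimately show False using vertex_sum[OF x] zz_nz by simp
  qed
qed

lemma L_pre: "L (pre w) = (\<Sum>e\<in>E - {e0}. scl (w e) (L (vv e)))"
  unfolding pre_def lf_sum lf_scl by (rule refl)

lemma L_in_span_S:
  assumes a: "a \<in> UV"
  shows "L a \<in> fvs.span ((\<lambda>e. L (vv e)) ` (E - {e0}))"
proof -
  have "L a = L (pre (L a))" using H_sub[OF L_ZV Im_sub[OF a]] by simp
  also have "\<dots> = (\<Sum>e\<in>E - {e0}. scl (L a e) (L (vv e)))" by (rule L_pre)
  finally have eq: "L a = (\<Sum>e\<in>E - {e0}. scl (L a e) (L (vv e)))" .
  have "(\<Sum>e\<in>E - {e0}. scl (L a e) (L (vv e))) \<in> fvs.span ((\<lambda>e. L (vv e)) ` (E - {e0}))"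
    by (rule span_comb) (rule imageI)
  then show ?thesis using eq by simp
qed

lemma dimcount:
  assumes V': "V' \<subseteq> V"
    and injv: "\<forall>a\<in>UV. L a = 0 \<and> (\<forall>x\<in>V - V'. a x = 0) \<longrightarrow> a = 0"
    and spanv: "\<forall>a\<in>UV. \<exists>a'\<in>UV. L a' = L a \<and> (\<forall>x\<in>V - V'. a' x = 0)"
  shows "card E = card V' + 1"
proof -
  define S where "S = (\<lambda>e. L (vv e)) ` (E - {e0})"
  define D where "D = (dl :: 'a \<Rightarrow> 'a \<Rightarrow> 'f) ` V'"
  have finV': "finite V'" using finV V' finite_subset by blast
  have injS: "inj_on (\<lambda>e. L (vv e)) (E - {e0})"
  proof
    fix e e' assume e: "e \<in> E - {e0}" and e': "e' \<in> E - {e0}" and eq: "L (vv e) = L (vv e')"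
    have "L (vv e) e = 1" using vv_coord[OF e e] by simp
    moreover have "L (vv e') e = (if e = e' then 1 else 0)" using vv_coord[OF e' e] by simp
    ultimately show "e = e'" using eq by (auto split: if_splits)
  qed
  have cardS: "card S = card E - 1"
    unfolding S_def using card_image[OF injS] e0E finE by simp
  have indS: "fvs.independent S"
    unfolding S_def
  proof (rule indep_coord, intro ballI)
    fix w assume "w \<in> (\<lambda>e. L (vv e)) ` (E - {e0})"
    then obtain e where e: "e \<in> E - {e0}" and w: "w = L (vv e)" by blast
    show "\<exists>k. \<forall>w'\<in>(\<lambda>e. L (vv e)) ` (E - {e0}). w' k = (if w' = w then 1 else 0)"
    proof (intro exI ballI)
      fix w' assume "w' \<in> (\<lambda>e. L (vv e)) ` (E - {e0})"
      then obtain e' where e': "e' \<in> E - {e0}" and w': "w' = L (vv e')" by blast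
      show "w' e = (if w' = w then 1 else 0)"
        using vv_coord[OF e' e] injS e e' w w' by (auto dest: inj_onD)
    qed
  qed
  define W where "W = {a \<in> UV. \<forall>x\<in>V - V'. a x = 0}"
  have subW: "fvs.subspace W"
    unfolding fvs.subspace_def W_def by (auto simp: zero_fun_def)
  have DW: "D \<subseteq> W" using V' unfolding D_def W_def by (auto simp: dl_app)
  have spanDW: "fvs.span D \<subseteq> W" by (rule fvs.span_minimal[OF DW subW])
  have injL: "inj_on L (fvs.span D)"
  proof
    fix a b assume a: "a \<in> fvs.span D" and b: "b \<in> fvs.span D" and eq: "L a = L b"
    have aW: "a \<in> W" and bW: "b \<in> W" using a b spanDW by blast+
    then have "a - b \<in> W" unfolding W_def by auto
    moreover have "L (a - b) = 0" using eq by (simp add: lf_diff)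
    ultimately have "a - b = 0" using injv unfolding W_def by blast
    then show "a = b" by simp
  qed
  have indD: "fvs.independent D"
    unfolding D_def
  proof (rule indep_coord, intro ballI)
    fix w assume "w \<in> (dl :: 'a \<Rightarrow> 'a \<Rightarrow> 'f) ` V'"
    then obtain x where w: "w = dl x" by blast
    show "\<exists>k. \<forall>w'\<in>(dl :: 'a \<Rightarrow> 'a \<Rightarrow> 'f) ` V'. w' k = (if w' = w then 1 else 0)"
    proof (intro exI ballI)
      fix w' assume "w' \<in> (dl :: 'a \<Rightarrow> 'a \<Rightarrow> 'f) ` V'"
      then obtain y where w': "w' = dl y" by blast
      have "dl y = (dl x :: 'a \<Rightarrow> 'f) \<longleftrightarrow> y = x"
        by (auto simp: dl_def fun_eq_iff split: if_splits)
      then show "w' x = (if w' = w then 1 else 0)" using w w' by (simp add: dl_app)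
    qed
  qed
  have indLD: "fvs.independent (L ` D)"
    using module_hom.independent_injective_image[OF hom_L indD injL] .
  have injdl: "inj_on (dl :: 'a \<Rightarrow> 'a \<Rightarrow> 'f) V'"
    by (rule inj_onI) (auto simp: dl_def fun_eq_iff split: if_splits)
  have injLD: "inj_on L D" using injL fvs.span_superset inj_on_subset by blast
  have cardLD: "card (L ` D) = card V'"
    using card_image[OF injLD] card_image[OF injdl] D_def by simp
  have LD_S: "L ` D \<subseteq> fvs.span S"
  proof
    fix w assume "w \<in> L ` D"
    then obtain d where d: "d \<in> D" and w: "w = L d" by blast
    have "d \<in> UV" using d DW unfolding W_def by blast
    then show "w \<in> fvs.span S" unfolding S_def w by (rule L_in_span_S)
  qed
  have finS: "finite S" unfolding S_def using finE by simp
  have c1: "card V' \<le> card E - 1"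
    using fvs.independent_span_bound[OF finS indLD LD_S] cardLD cardS by simp
  have S_LD: "S \<subseteq> fvs.span (L ` D)"
  proof
    fix w assume "w \<in> S"
    then obtain e where e: "e \<in> E - {e0}" and w: "w = L (vv e)" unfolding S_def by blast
    obtain a' where a': "a' \<in> UV" "L a' = L (vv e)" "\<forall>x\<in>V - V'. a' x = 0"
      using spanv vv_UV[OF e] by blast
    have van: "\<forall>x. x \<notin> V' \<longrightarrow> a' x = 0" using a' by auto
    have "L a' = (\<Sum>x\<in>V'. scl (a' x) (L (dl x)))"
      by (subst expand_dl[OF finV' van]) (simp add: lf_sum lf_scl)
    moreover have "(\<Sum>x\<in>V'. scl (a' x) (L (dl x))) \<in> fvs.span (L ` D)"
      by (rule span_comb) (simp add: D_def)
    ultimately have "L a' \<in> fvs.span (L ` D)" by simp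
    then show "w \<in> fvs.span (L ` D)" using w a' by simp
  qed
  have finLD: "finite (L ` D)" unfolding D_def using finV' by simp
  have c2: "card S \<le> card (L ` D)"
    using fvs.independent_span_bound[OF finLD indS S_LD] by simp
  have "card E \<ge> 1" using e0E finE card_0_eq by fastforce
  then show ?thesis using c1 c2 cardS cardLD by linarith
qed

end

lemma sg_adjD: "simple_graph V E \<Longrightarrow> adj E x y \<Longrightarrow> x \<in> V \<and> y \<in> V \<and> {x, y} \<in> E \<and> x \<noteq> y"
  by (auto simp: adj_def simple_graph_def)

lemma adj_sym: "adj E x y \<Longrightarrow> adj E y x"
  by (auto simp: adj_def insert_commute)

lemma deg_eq:
  assumes g: "simple_graph V E"
  shows "card {y. adj E x y} = card {e\<in>E. x \<in> e}"
proof -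
  have "bij_betw (\<lambda>y. {x, y}) {y. adj E x y} {e\<in>E. x \<in> e}"
  proof (rule bij_betw_imageI)
    show "inj_on (\<lambda>y. {x, y}) {y. adj E x y}"
      by (rule inj_onI) (auto simp: adj_def doubleton_eq_iff)
    show "(\<lambda>y. {x, y}) ` {y. adj E x y} = {e \<in> E. x \<in> e}"
    proof
      show "(\<lambda>y. {x, y}) ` {y. adj E x y} \<subseteq> {e \<in> E. x \<in> e}" by (auto simp: adj_def)
      show "{e \<in> E. x \<in> e} \<subseteq> (\<lambda>y. {x, y}) ` {y. adj E x y}"
      proof
        fix e assume e: "e \<in> {e \<in> E. x \<in> e}"
        then have "card e = 2" using g by (auto simp: simple_graph_def)
        then obtain a b where ab: "e = {a, b}" "a \<noteq> b" by (auto simp: card_2_iff)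
        show "e \<in> (\<lambda>y. {x, y}) ` {y. adj E x y}"
        proof (cases "x = a")
          case True
          then show ?thesis using ab e by (auto simp: adj_def)
        next
          case False
          then have "x = b" using ab e by auto
          then show ?thesis using ab e by (auto simp: adj_def insert_commute intro!: image_eqI[of _ _ a])
        qed
      qed
    qed
  qed
  then show ?thesis by (rule bij_betw_same_card)
qed

lemma handshake:
  assumes g: "simple_graph V E"
  shows "(\<Sum>x\<in>V. card {e\<in>E. x \<in> e}) = 2 * card E"
proof -
  have finV: "finite V" using g by (simp add: simple_graph_def)
  have EP: "E \<subseteq> Pow V" using g by (auto simp: simple_graph_def)
  then have finE: "finite E" using finV finite_subset by blast
  have "(\<Sum>x\<in>V. card {e\<in>E. x \<in> e}) = (\<Sum>x\<in>V. \<Sum>e\<in>E. if x \<in> e then 1 else 0)"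
    using finE by (simp add: sum.inter_filter[symmetric])
  also have "\<dots> = (\<Sum>e\<in>E. \<Sum>x\<in>V. if x \<in> e then 1 else 0)" by (rule sum.swap)
  also have "\<dots> = (\<Sum>e\<in>E. card {x\<in>V. x \<in> e})"
    using finV by (simp add: sum.inter_filter[symmetric])
  also have "\<dots> = (\<Sum>e\<in>E. 2)"
  proof (rule sum.cong[OF refl])
    fix e assume "e \<in> E"
    then have "e \<subseteq> V" "card e = 2" using g by (auto simp: simple_graph_def)
    moreover then have "{x\<in>V. x \<in> e} = e" by auto
    ultimately show "card {x\<in>V. x \<in> e} = 2" by simp
  qed
  finally show ?thesis by simp
qed

fun wk :: "'a set set \<Rightarrow> 'a \<Rightarrow> 'a \<Rightarrow> nat \<Rightarrow> 'a \<times> 'a" where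
  "wk E a b 0 = (a, b)"
| "wk E a b (Suc n) = (snd (wk E a b n), SOME w. adj E (snd (wk E a b n)) w \<and> w \<noteq> fst (wk E a b n))"

locale cyc =
  fixes V :: "'a set" and E :: "'a set set" and a b :: 'a
  assumes graph: "simple_graph V E"
    and conn: "connected_graph V E"
    and deg: "\<forall>x\<in>V. card {y. adj E x y} = 2"
    and ab: "adj E a b"
begin

definition f :: "nat \<Rightarrow> 'a" where "f n = fst (wk E a b n)"

lemma f0: "f 0 = a" by (simp add: f_def)
lemma f1: "f (Suc 0) = b" by (simp add: f_def)
lemma fSS: "f (Suc (Suc n)) = (SOME w. adj E (f (Suc n)) w \<and> w \<noteq> f n)"
  by (simp add: f_def)

lemma finV: "finite V" using graph by (simp add: simple_graph_def)

lemma nb_two: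
  assumes "adj E x y" "adj E x w" "y \<noteq> w" "adj E x t"
  shows "t = y \<or> t = w"
proof -
  have "x \<in> V" using sg_adjD[OF graph assms(1)] by blast
  then have c: "card {y. adj E x y} = 2" using deg by blast
  then obtain p q where pq: "{y. adj E x y} = {p, q}" by (auto simp: card_2_iff)
  have "y \<in> {p, q}" "w \<in> {p, q}" "t \<in> {p, q}" using pq assms(1,2,4) mem_Collect_eq by metis+
  then show ?thesis using assms(3) by auto
qed

lemma nb_other:
  assumes "adj E x y"
  shows "\<exists>w. adj E x w \<and> w \<noteq> y"
proof -
  have "x \<in> V" using sg_adjD[OF graph assms(1)] by blast
  then have c: "card {y. adj E x y} = 2" using deg by blast
  then obtain p q where pq: "{y. adj E x y} = {p, q}" "p \<noteq> q" by (auto simp: card_2_iff)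
  then show ?thesis by blast
qed

lemma f_adj: "adj E (f n) (f (Suc n))"
proof (induction n)
  case 0 then show ?case using ab f0 f1 by simp
next
  case (Suc n)
  have "\<exists>w. adj E (f (Suc n)) w \<and> w \<noteq> f n" using nb_other[OF adj_sym[OF Suc]] .
  then have "adj E (f (Suc n)) (f (Suc (Suc n))) \<and> f (Suc (Suc n)) \<noteq> f n"
    unfolding fSS by (rule someI_ex)
  then show ?case by blast
qed

lemma f_back: "f (Suc (Suc n)) \<noteq> f n"
proof -
  have "\<exists>w. adj E (f (Suc n)) w \<and> w \<noteq> f n" using nb_other[OF adj_sym[OF f_adj]] .
  then have "adj E (f (Suc n)) (f (Suc (Suc n))) \<and> f (Suc (Suc n)) \<noteq> f n"
    unfolding fSS by (rule someI_ex)
  then show ?thesis by blast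
qed

lemma f_neq: "f (Suc n) \<noteq> f n" using f_adj[of n] by (auto simp: adj_def)

lemma f_V: "f n \<in> V" using sg_adjD[OF graph f_adj[of n]] by blast

lemma f_nb: "adj E (f (Suc n)) t \<Longrightarrow> t = f n \<or> t = f (Suc (Suc n))"
  using nb_two[OF adj_sym[OF f_adj[of n]] f_adj[of "Suc n"]] f_back[of n] by metis

definition P :: "nat \<Rightarrow> bool" where "P m \<longleftrightarrow> (\<exists>j<m. f j = f m)"

lemma ex_P: "\<exists>m. P m"
proof -
  have "\<not> inj_on f {0..card V}"
  proof
    assume inj: "inj_on f {0..card V}"
    have "f ` {0..card V} \<subseteq> V" using f_V by blast
    then have "card (f ` {0..card V}) \<le> card V" using finV card_mono by blast
    then show False using card_image[OF inj] by simp
  qed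
  then obtain i j where "i \<noteq> j" "f i = f j" unfolding inj_on_def by blast
  then show ?thesis unfolding P_def by (metis linorder_neqE_nat)
qed

definition m :: nat where "m = (LEAST m. P m)"

lemma Pm: "P m" unfolding m_def using ex_P LeastI_ex by metis
lemma notP: "k < m \<Longrightarrow> \<not> P k" unfolding m_def using not_less_Least by blast

lemma dist: "i < k \<Longrightarrow> k < m \<Longrightarrow> f i \<noteq> f k"
  using notP[of k] unfolding P_def by blast

lemma fm: "f m = f 0"
proof -
  obtain j where j: "j < m" "f j = f m" using Pm unfolding P_def by blast
  show ?thesis
  proof (cases j)
    case 0 then show ?thesis using j by simp
  next
    case (Suc j')
    obtain m1 where m1: "m = Suc m1" using j by (cases m) auto
    have "adj E (f (Suc m1)) (f m1)" using adj_sym[OF f_adj[of m1]] .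
    then have "adj E (f (Suc j')) (f m1)" using j Suc m1 by simp
    then have "f m1 = f j' \<or> f m1 = f (Suc (Suc j'))" by (rule f_nb)
    then show ?thesis
    proof
      assume "f m1 = f j'"
      then have "P m1" unfolding P_def using j Suc m1 by (intro exI[of _ j']) auto
      then show ?thesis using notP m1 by auto
    next
      assume h: "f m1 = f (Suc (Suc j'))"
      consider "Suc (Suc j') < m1" | "Suc (Suc j') = m1" | "Suc j' = m1" using j Suc m1 by linarith
      then show ?thesis
      proof cases
        case 1
        then have "P m1" unfolding P_def using h by (intro exI[of _ "Suc (Suc j')"]) auto
        then show ?thesis using notP m1 by auto
      next
        case 2
        then have "f m = f (Suc (Suc (Suc j')))" using m1 by simp
        then show ?thesis using f_back[of "Suc j'"] j Suc by simp
      next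
        case 3
        then show ?thesis using h f_neq[of m1] by simp
      qed
    qed
  qed
qed

lemma m3: "3 \<le> m"
proof -
  have "m \<noteq> 0" using Pm unfolding P_def by auto
  moreover have "m \<noteq> 1" using fm f_neq[of 0] by auto
  moreover have "m \<noteq> 2" using fm f_back[of 0] by (auto simp: numeral_2_eq_2)
  ultimately show ?thesis by linarith
qed

lemma fSmod: "i < m \<Longrightarrow> f (Suc i mod m) = f (Suc i)"
proof -
  assume i: "i < m"
  show ?thesis
  proof (cases "Suc i < m")
    case False
    then have "Suc i = m" using i by simp
    then show ?thesis using fm by simp
  qed simp
qed

lemma nbr:
  assumes i: "i < m" and t: "adj E (f i) t"
  shows "\<exists>k<m. {f i, t} = {f k, f (Suc k)}"
proof (cases i)
  case (Suc i')
  then have "t = f i' \<or> t = f (Suc (Suc i'))" using f_nb t by simp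
  then show ?thesis
  proof
    assume "t = f i'" then show ?thesis using Suc i by (intro exI[of _ i']) (auto simp: insert_commute)
  qed (use Suc i in auto)
next
  case 0
  obtain m1 where m1: "m = Suc m1" using m3 by (cases m) auto
  have a1: "adj E (f 0) (f (Suc 0))" using f_adj by blast
  have a2: "adj E (f 0) (f m1)" using adj_sym[OF f_adj[of m1]] fm m1 by simp
  have ne: "f (Suc 0) \<noteq> f m1" using dist[of 1 m1] m3 m1 by auto
  have "t = f (Suc 0) \<or> t = f m1" using nb_two[OF a1 a2 ne] t 0 by simp
  then show ?thesis
  proof
    assume "t = f m1"
    then show ?thesis using 0 m1 fm by (intro exI[of _ m1]) (auto simp: insert_commute)
  next
    assume "t = f (Suc 0)"
    then show ?thesis using 0 m3 by (intro exI[of _ 0]) auto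
  qed
qed

lemma C_closed: "i < m \<Longrightarrow> adj E (f i) t \<Longrightarrow> t \<in> f ` {0..<m}"
proof -
  assume "i < m" "adj E (f i) t"
  then obtain k where k: "k < m" "{f i, t} = {f k, f (Suc k)}" using nbr by blast
  have "f k \<in> f ` {0..<m}" using k by simp
  moreover have "f (Suc k) \<in> f ` {0..<m}"
  proof (cases "Suc k < m")
    case True then show ?thesis by simp
  next
    case False then have "Suc k = m" using k by simp
    then show ?thesis using fm m3 by (metis atLeastLessThan_iff image_eqI le_zero_eq not_le numeral_eq_Suc zero_less_Suc)
  qed
  ultimately show ?thesis using k by (auto simp: doubleton_eq_iff)
qed

lemma V_sub: "V \<subseteq> f ` {0..<m}"
proof
  fix y assume y: "y \<in> V"
  have "(adj E)\<^sup>*\<^sup>* (f 0) y" using conn y f_V by (simp add: connected_graph_def)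
  then show "y \<in> f ` {0..<m}"
  proof (induction rule: rtranclp_induct)
    case base then show ?case using m3 by force
  next
    case (step y w)
    then obtain i where "i < m" "y = f i" by auto
    then show ?case using C_closed step by blast
  qed
qed

lemma injf: "inj_on f {0..<m}"
proof (rule inj_onI)
  fix i k assume "i \<in> {0..<m}" "k \<in> {0..<m}" "f i = f k"
  then show "i = k" using dist by (metis atLeastLessThan_iff linorder_neqE_nat)
qed

lemma img: "f ` {0..<m} = V" using V_sub f_V by blast

lemma cardV: "card V = m"
  using card_image[OF injf] img by simp

lemma edges: "E = {{f i, f (Suc i mod card V)} | i. i < card V}"
proof
  show "E \<subseteq> {{f i, f (Suc i mod card V)} | i. i < card V}"
  proof
    fix e assume e: "e \<in> E"
    then have "card e = 2" "e \<subseteq> V" using graph by (auto simp: simple_graph_def)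
    then obtain x y where xy: "e = {x, y}" "x \<noteq> y" "x \<in> V" by (auto simp: card_2_iff)
    then have "adj E x y" using e by (simp add: adj_def)
    obtain i where i: "i < m" "x = f i" using xy img by force
    obtain k where "k < m" "{f i, y} = {f k, f (Suc k)}" using nbr[OF i(1)] \<open>adj E x y\<close> i by blast
    then show "e \<in> {{f i, f (Suc i mod card V)} | i. i < card V}"
      using xy i fSmod cardV by auto
  qed
  show "{{f i, f (Suc i mod card V)} | i. i < card V} \<subseteq> E"
  proof
    fix e assume "e \<in> {{f i, f (Suc i mod card V)} | i. i < card V}"
    then obtain i where "i < m" "e = {f i, f (Suc i mod card V)}" using cardV by auto
    then have "e = {f i, f (Suc i)}" using fSmod cardV by simp
    then show "e \<in> E" using f_adj[of i] by (simp add: adj_def)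
  qed
qed

lemma cycle_result:
  "\<exists>g. bij_betw g {0..<card V} V \<and> E = {{g i, g (Suc i mod card V)} | i. i < card V}
     \<and> (\<forall>i. adj E (g i) (g (Suc i))) \<and> g (card V) = g 0 \<and> 3 \<le> card V"
proof (intro exI conjI allI)
  show "bij_betw f {0..<card V} V" unfolding bij_betw_def using injf img cardV by simp
  show "E = {{f i, f (Suc i mod card V)} | i. i < card V}" by (rule edges)
  fix i show "adj E (f i) (f (Suc i))" by (rule f_adj)
next
  show "f (card V) = f 0" using fm cardV by simp
  show "3 \<le> card V" using m3 cardV by simp
qed

end

context ctx begin

lemma caseA_card: "\<forall>a\<in>UV. L a = 0 \<longrightarrow> a = 0 \<Longrightarrow> card E = card V + 1"
  using dimcount[of V] by auto

lemma s_nz: "s \<in> UV \<Longrightarrow> L s = 0 \<Longrightarrow> s \<noteq> 0 \<Longrightarrow> y \<in> V \<Longrightarrow> s y \<noteq> 0"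
  using ker_zero by blast

lemma caseB_card:
  assumes s: "s \<in> UV" "s \<noteq> 0" "L s = 0"
  shows "card E = card V"
proof -
  obtain x0 where x0: "x0 \<in> V" using V_two by blast
  have sx0: "s x0 \<noteq> 0" using s_nz[OF s(1,3,2) x0] .
  have "card E = card (V - {x0}) + 1"
  proof (rule dimcount)
    show "V - {x0} \<subseteq> V" by blast
    show "\<forall>a\<in>UV. L a = 0 \<and> (\<forall>x\<in>V - (V - {x0}). a x = 0) \<longrightarrow> a = 0"
      using ker_zero x0 by auto
    show "\<forall>a\<in>UV. \<exists>a'\<in>UV. L a' = L a \<and> (\<forall>x\<in>V - (V - {x0}). a' x = 0)"
    proof
      fix a assume a: "a \<in> UV"
      define a' where "a' = a - scl (a x0 / s x0) s"
      have "a' \<in> UV" using a s by (simp add: a'_def)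
      moreover have "L a' = L a"
      proof -
        have "L a' = L a - scl (a x0 / s x0) (L s)" unfolding a'_def by (simp only: lf_diff lf_scl)
        also have "scl (a x0 / s x0) (L s) = 0" using s(3) by (simp add: fun_eq_iff)
        finally show ?thesis by simp
      qed
      moreover have "a' x0 = 0" using sx0 by (simp add: a'_def)
      ultimately show "\<exists>a'\<in>UV. L a' = L a \<and> (\<forall>x\<in>V - (V - {x0}). a' x = 0)" using x0 by blast
    qed
  qed
  then show ?thesis using x0 finV by (simp add: card_Diff_singleton) (metis One_nat_def Suc_pred card_gt_0_iff empty_iff)
qed

lemma caseB_deg:
  assumes s: "s \<in> UV" "s \<noteq> 0" "L s = 0"
  shows "\<forall>x\<in>V. card {y. adj E x y} = 2"
proof (rule ccontr)
  assume "\<not> (\<forall>x\<in>V. card {y. adj E x y} = 2)"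
  then obtain x where x: "x \<in> V" "card {e\<in>E. x \<in> e} \<noteq> 2" using deg_eq[OF graph] by auto
  have "(\<Sum>x\<in>V. (2::nat)) < (\<Sum>x\<in>V. card {e\<in>E. x \<in> e})"
  proof (rule sum_strict_mono_ex1[OF finV])
    show "\<forall>x\<in>V. 2 \<le> card {e\<in>E. x \<in> e}" using deg_ge2 by blast
    show "\<exists>a\<in>V. 2 < card {e\<in>E. a \<in> e}" using x deg_ge2[OF x(1)] by (intro bexI[of _ x]) auto
  qed
  then have "2 * card V < 2 * card E" using handshake[OF graph] by simp
  then show False using caseB_card[OF s] by simp
qed

lemma caseB_cycle:
  assumes s: "s \<in> UV" "s \<noteq> 0" "L s = 0"
  shows "is_even_cycle V E \<and> 4 \<le> card V"
proof -
  obtain x0 where x0: "x0 \<in> V" using V_two by blast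
  obtain y0 where y0: "adj E x0 y0" using has_nb[OF x0] by blast
  interpret cyc V E x0 y0
    by unfold_locales (rule graph, rule conn, rule caseB_deg[OF s], rule y0)
  from cycle_result obtain g where gall: "bij_betw g {0..<card V} V \<and> E = {{g i, g (Suc i mod card V)} | i. i < card V}
     \<and> (\<forall>i. adj E (g i) (g (Suc i))) \<and> g (card V) = g 0 \<and> 3 \<le> card V" ..
  note g = conjunct1[OF gall] conjunct1[OF conjunct2[OF gall]] conjunct1[OF conjunct2[OF conjunct2[OF gall]]]
    conjunct1[OF conjunct2[OF conjunct2[OF conjunct2[OF gall]]]] conjunct2[OF conjunct2[OF conjunct2[OF conjunct2[OF gall]]]]
  have alt: "s (g i) = (-1)^i * s (g 0)" for i
  proof (induction i)
    case (Suc i)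
    have "s (g (Suc i)) = - s (g i)" by (rule ker_adj[OF s(3) g(3)[rule_format]])
    then show ?case using Suc by simp
  qed simp
  have g0V: "g 0 \<in> V" using adjD[of "g 0" "g (Suc 0)"] g(3) by simp
  have sg0: "s (g 0) \<noteq> 0" using s_nz[OF s(1,3,2) g0V] .
  have ev: "even (card V)"
  proof (rule ccontr)
    assume od: "odd (card V)"
    have "s (g 0) = (-1)^(card V) * s (g 0)" using alt[of "card V"] unfolding g(4) .
    also have "(-1::'f)^(card V) = -1" using od by simp
    finally have eq: "s (g 0) = -1 * s (g 0)" .
    have "2 * s (g 0) = 0" using eq by algebra
    then show False using char sg0 by simp
  qed
  have "card V \<noteq> 3" using ev by auto
  then have "4 \<le> card V" using g(5) by linarith
  moreover have "is_even_cycle V E"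
    unfolding is_even_cycle_def is_cycle_def using g(1,2,5) ev by (intro conjI exI[of _ g]) simp_all
  ultimately show ?thesis by blast
qed

lemma caseA_ge4:
  assumes c: "card E = card V + 1"
  shows "4 \<le> card V"
proof (rule ccontr)
  assume "\<not> 4 \<le> card V"
  then have le3: "card V \<le> 3" by simp
  have "E \<subseteq> {B. B \<subseteq> V \<and> card B = 2}" using edge by blast
  moreover have "finite {B. B \<subseteq> V \<and> card B = 2}"
    by (rule finite_subset[of _ "Pow V"]) (use finV in auto)
  ultimately have "card E \<le> card {B. B \<subseteq> V \<and> card B = 2}" by (simp add: card_mono)
  then have "card E \<le> card V choose 2" using n_subsets[OF finV, of 2] by simp
  moreover have "card V choose 2 < card V + 1"
  proof -
    consider "card V = 0" | "card V = 1" | "card V = 2" | "card V = 3" using le3 by linarith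
    then show ?thesis by cases (simp_all add: numeral_eq_Suc)
  qed
  ultimately show False using c by simp
qed

end

lemma Uvec_T: "Uvec (T_alg n :: (nat, nat, 'f::field) nalg) = {c. \<forall>i. i \<notin> {1..n} \<longrightarrow> c i = 0}"
  by (simp add: Uvec_def T_alg_def)
lemma Zvec_T: "Zvec (T_alg n :: (nat, nat, 'f::field) nalg) = {c. \<forall>i. i \<notin> {0..n} \<longrightarrow> c i = 0}"
  by (simp add: Zvec_def T_alg_def)

lemma T_nprod:
  "nprod (T_alg n :: (nat, nat, 'f::field) nalg) c d = (\<lambda>j. if j \<in> {0..n} then
     (if j = 0 then (\<Sum>i\<in>{1..n}. c i) * (\<Sum>k\<in>{1..n}. d k) else c j * d j) else 0)"
proof
  fix j
  show "nprod (T_alg n :: (nat, nat, 'f::field) nalg) c d j = (if j \<in> {0..n} then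
     (if j = 0 then (\<Sum>i\<in>{1..n}. c i) * (\<Sum>k\<in>{1..n}. d k) else c j * d j) else 0)"
  proof (cases "j \<in> {0..n}")
    case True
    show ?thesis
    proof (cases "j = 0")
      case True
      then show ?thesis by (simp add: nprod_def T_alg_def sum_product)
    next
      case False
      have jn: "j \<in> {1..n}" using False \<open>j \<in> {0..n}\<close> by auto
      have "nprod (T_alg n :: (nat, nat, 'f::field) nalg) c d j =
        (\<Sum>i\<in>{1..n}. \<Sum>k\<in>{1..n}. c i * d k * (if j = i \<and> i = k then 1 else 0))"
        using False True by (simp add: nprod_def T_alg_def)
      also have "\<dots> = (\<Sum>i\<in>{1..n}. if i = j then c i * d i else 0)"
      proof (rule sum.cong[OF refl])
        fix i assume "i \<in> {1..n}"
        have "(\<Sum>k\<in>{1..n}. c i * d k * (if j = i \<and> i = k then 1 else 0)) =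
              (\<Sum>k\<in>{1..n}. if k = i then (if j = i then c i * d i else 0) else 0)"
          by (rule sum.cong) auto
        also have "\<dots> = (if i = j then c i * d i else 0)" using \<open>i \<in> {1..n}\<close> by (simp add: sum.delta')
        finally show "(\<Sum>k\<in>{1..n}. c i * d k * (if j = i \<and> i = k then 1 else 0)) = (if i = j then c i * d i else 0)" .
      qed
      also have "\<dots> = c j * d j" using jn by (simp add: sum.delta')
      finally show ?thesis using True False by simp
    qed
  qed (simp add: nprod_def T_alg_def)
qed

lemma Uvec_sum: "Uvec (nalg_sum (F0 :: (unit, nat, 'f::field) nalg) (T_alg n :: (nat, nat, 'f) nalg))
   = {c. \<forall>i. i \<notin> {1..n} \<longrightarrow> c (Inr i) = 0}"
proof -
  have ub: "ubasis (nalg_sum (F0 :: (unit, nat, 'f::field) nalg) (T_alg n :: (nat, nat, 'f) nalg)) = range Inl \<union> Inr ` {1..n}"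
    by (simp add: nalg_sum_def T_alg_def F0_def)
  have "(\<forall>x::unit + nat. x \<notin> range Inl \<union> Inr ` {1..n} \<longrightarrow> c x = 0) \<longleftrightarrow> (\<forall>i. i \<notin> {1..n} \<longrightarrow> c (Inr i) = (0::'f))" for c :: "unit + nat \<Rightarrow> 'f"
  proof
    assume "\<forall>x::unit + nat. x \<notin> range Inl \<union> Inr ` {1..n} \<longrightarrow> c x = 0"
    then show "\<forall>i. i \<notin> {1..n} \<longrightarrow> c (Inr i) = 0" by auto
  next
    assume h: "\<forall>i. i \<notin> {1..n} \<longrightarrow> c (Inr i) = 0"
    show "\<forall>x::unit + nat. x \<notin> range Inl \<union> Inr ` {1..n} \<longrightarrow> c x = 0"
    proof (intro allI impI)
      fix x :: "unit + nat" assume x: "x \<notin> range Inl \<union> Inr ` {1..n}"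
      have x1: "x \<notin> range Inl" and x2: "x \<notin> Inr ` {1..n}" using x by auto
      obtain i where i: "x = Inr i" using x1 by (cases x) auto
      have "i \<notin> {1..n}" using x2 i by auto
      then show "c x = 0" using h i by simp
    qed
  qed
  then show ?thesis unfolding Uvec_def ub by (rule Collect_cong)
qed

lemma Zvec_sum: "Zvec (nalg_sum (F0 :: (unit, nat, 'f::field) nalg) (T_alg n :: (nat, nat, 'f) nalg))
   = {c. (\<forall>u. c (Inl u) = 0) \<and> (\<forall>i. i \<notin> {0..n} \<longrightarrow> c (Inr i) = 0)}"
proof -
  have zb: "zbasis (nalg_sum (F0 :: (unit, nat, 'f::field) nalg) (T_alg n :: (nat, nat, 'f) nalg)) = Inr ` {0..n}"
    by (simp add: nalg_sum_def T_alg_def F0_def)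
  have "(\<forall>x::nat + nat. x \<notin> Inr ` {0..n} \<longrightarrow> c x = 0) \<longleftrightarrow> ((\<forall>u. c (Inl u) = 0) \<and> (\<forall>i. i \<notin> {0..n} \<longrightarrow> c (Inr i) = (0::'f)))" for c :: "nat + nat \<Rightarrow> 'f"
  proof
    assume h: "\<forall>x::nat + nat. x \<notin> Inr ` {0..n} \<longrightarrow> c x = 0"
    have "c (Inr i) = 0" if "i \<notin> {0..n}" for i
    proof -
      have "Inr i \<notin> Inr ` {0..n}" using that by auto
      then show ?thesis using h by blast
    qed
    moreover have "c (Inl u) = 0" for u using h by auto
    ultimately show "(\<forall>u. c (Inl u) = 0) \<and> (\<forall>i. i \<notin> {0..n} \<longrightarrow> c (Inr i) = 0)" by blast
  next
    assume h: "(\<forall>u. c (Inl u) = 0) \<and> (\<forall>i. i \<notin> {0..n} \<longrightarrow> c (Inr i) = 0)"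
    show "\<forall>x::nat + nat. x \<notin> Inr ` {0..n} \<longrightarrow> c x = 0"
    proof (intro allI impI)
      fix x :: "nat + nat" assume x: "x \<notin> Inr ` {0..n}"
      show "c x = 0"
      proof (cases x)
        case (Inl u) then show ?thesis using h by simp
      next
        case (Inr i)
        then have "i \<notin> {0..n}" using x by auto
        then show ?thesis using h Inr by blast
      qed
    qed
  qed
  then show ?thesis unfolding Zvec_def zb by (rule Collect_cong)
qed

lemma nprod_sum:
  "nprod (nalg_sum (F0 :: (unit, nat, 'f::field) nalg) (T_alg n :: (nat, nat, 'f) nalg)) c d =
   (\<lambda>y. case y of Inl _ \<Rightarrow> 0 | Inr j \<Rightarrow> nprod (T_alg n) (c \<circ> Inr) (d \<circ> Inr) j)"
proof
  fix y
  show "nprod (nalg_sum (F0 :: (unit, nat, 'f::field) nalg) (T_alg n :: (nat, nat, 'f) nalg)) c d y =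
   (case y of Inl _ \<Rightarrow> 0 | Inr j \<Rightarrow> nprod (T_alg n) (c \<circ> Inr) (d \<circ> Inr) j)"
  proof (cases y)
    case (Inl u)
    then show ?thesis by (simp add: nprod_def nalg_sum_def F0_def image_iff)
  next
    case (Inr j)
    let ?A = "nalg_sum (F0 :: (unit, nat, 'f::field) nalg) (T_alg n :: (nat, nat, 'f) nalg)"
    have ub: "ubasis ?A = Inl ` UNIV \<union> Inr ` {1..n}" by (simp add: nalg_sum_def F0_def T_alg_def)
    have zb: "(Inr j \<in> zbasis ?A) = (j \<in> {0..n})" by (auto simp: nalg_sum_def F0_def T_alg_def)
    have scI: "sc ?A x x' (Inr j) = (case (x, x') of (Inr i, Inr k) \<Rightarrow> sc (T_alg n :: (nat, nat, 'f) nalg) i k j | _ \<Rightarrow> 0)" for x x'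
      by (cases x; cases x') (simp_all add: nalg_sum_def)
    have inner: "(\<Sum>x'\<in>ubasis ?A. c x * d x' * sc ?A x x' (Inr j)) =
        (case x of Inl _ \<Rightarrow> 0 | Inr i \<Rightarrow> (\<Sum>k\<in>{1..n}. c (Inr i) * d (Inr k) * sc (T_alg n :: (nat, nat, 'f) nalg) i k j))" for x
    proof -
      have "(\<Sum>x'\<in>ubasis ?A. c x * d x' * sc ?A x x' (Inr j)) =
        (\<Sum>x'\<in>Inl ` UNIV. c x * d x' * sc ?A x x' (Inr j)) + (\<Sum>x'\<in>Inr ` {1..n}. c x * d x' * sc ?A x x' (Inr j))"
        unfolding ub by (rule sum.union_disjoint) auto
      also have "(\<Sum>x'\<in>Inl ` UNIV. c x * d x' * sc ?A x x' (Inr j)) = 0"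
        by (rule sum.neutral) (auto simp: scI split: sum.splits)
      also have "(\<Sum>x'\<in>Inr ` {1..n}. c x * d x' * sc ?A x x' (Inr j)) =
          (\<Sum>k\<in>{1..n}. c x * d (Inr k) * sc ?A x (Inr k) (Inr j))"
        by (rule sum.reindex[unfolded comp_def]) simp
      finally show ?thesis by (cases x) (simp_all add: scI)
    qed
    have "nprod ?A c d (Inr j) = (if j \<in> {0..n} then (\<Sum>x\<in>ubasis ?A. \<Sum>x'\<in>ubasis ?A. c x * d x' * sc ?A x x' (Inr j)) else 0)"
      using zb by (simp add: nprod_def)
    also have "(\<Sum>x\<in>ubasis ?A. \<Sum>x'\<in>ubasis ?A. c x * d x' * sc ?A x x' (Inr j)) =
       (\<Sum>x\<in>ubasis ?A. (case x of Inl _ \<Rightarrow> 0 | Inr i \<Rightarrow> (\<Sum>k\<in>{1..n}. c (Inr i) * d (Inr k) * sc (T_alg n :: (nat, nat, 'f) nalg) i k j)))"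
      using inner by simp
    also have "\<dots> = (\<Sum>x\<in>range (Inl :: unit \<Rightarrow> unit + nat). (case x of Inl _ \<Rightarrow> 0 | Inr i \<Rightarrow> (\<Sum>k\<in>{1..n}. c (Inr i) * d (Inr k) * sc (T_alg n :: (nat, nat, 'f) nalg) i k j)))
        + (\<Sum>x\<in>(Inr :: nat \<Rightarrow> unit + nat) ` {1..n}. (case x of Inl _ \<Rightarrow> 0 | Inr i \<Rightarrow> (\<Sum>k\<in>{1..n}. c (Inr i) * d (Inr k) * sc (T_alg n :: (nat, nat, 'f) nalg) i k j)))"
      unfolding ub by (rule sum.union_disjoint) auto
    also have "\<dots> = (\<Sum>i\<in>{1..n}. \<Sum>k\<in>{1..n}. c (Inr i) * d (Inr k) * sc (T_alg n :: (nat, nat, 'f) nalg) i k j)"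
      by (simp add: sum.reindex)
    finally show ?thesis using Inr by (simp add: nprod_def T_alg_def)
  qed
qed


context ctx begin

definition gg :: "nat \<Rightarrow> 'a set" where "gg = (SOME h. bij_betw h {1..card E - 1} (E - {e0}))"

lemma gg_bij: "bij_betw gg {1..card E - 1} (E - {e0})"
proof -
  have "card (E - {e0}) = card E - 1" using e0E finE by simp
  then have "\<exists>h. bij_betw h {1..card E - 1} (E - {e0})"
    using ex_bij_betw_nat_finite_1[of "E - {e0}"] finE by simp
  then show ?thesis unfolding gg_def by (rule someI_ex)
qed

lemma gg_in: "i \<in> {1..card E - 1} \<Longrightarrow> gg i \<in> E - {e0}"
  using gg_bij bij_betwE by blast

definition ginv :: "'a set \<Rightarrow> nat" where "ginv = inv_into {1..card E - 1} gg"

lemma ginv: "e \<in> E - {e0} \<Longrightarrow> ginv e \<in> {1..card E - 1} \<and> gg (ginv e) = e"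
  unfolding ginv_def using gg_bij
  by (metis bij_betw_def f_inv_into_f inv_into_into)

lemma ginv_gg: "i \<in> {1..card E - 1} \<Longrightarrow> ginv (gg i) = i"
  unfolding ginv_def using gg_bij by (simp add: bij_betw_def)

definition phi0 :: "('a \<Rightarrow> 'f) \<Rightarrow> nat \<Rightarrow> 'f" where
  "phi0 a = (\<lambda>i. if i \<in> {1..card E - 1} then zz (gg i) * L a (gg i) else 0)"

definition psi0 :: "('a set \<Rightarrow> 'f) \<Rightarrow> nat \<Rightarrow> 'f" where
  "psi0 w = (\<lambda>j. if j = 0 then w e0 else if j \<in> {1..card E - 1} then zz (gg j) * zz (gg j) * w (gg j) else 0)"

lemma sum_rest: "a \<in> UV \<Longrightarrow> (\<Sum>e\<in>E - {e0}. zz e * L a e) = - L a e0"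
proof -
  assume a: "a \<in> UV"
  have "0 = (\<Sum>e\<in>E. zz e * L a e)" using Im_sub[OF a] by simp
  also have "\<dots> = zz e0 * L a e0 + (\<Sum>e\<in>E - {e0}. zz e * L a e)"
    using e0E finE by (simp add: sum.remove)
  also have "zz e0 = 1" by (simp add: zz_def)
  finally show ?thesis by (simp add: eq_neg_iff_add_eq_0 add.commute)
qed

lemma phi0_sum: "a \<in> UV \<Longrightarrow> (\<Sum>i\<in>{1..card E - 1}. phi0 a i) = - L a e0"
proof -
  assume a: "a \<in> UV"
  have "(\<Sum>i\<in>{1..card E - 1}. phi0 a i) = (\<Sum>i\<in>{1..card E - 1}. zz (gg i) * L a (gg i))"
    by (rule sum.cong) (auto simp: phi0_def)
  also have "\<dots> = (\<Sum>e\<in>E - {e0}. zz e * L a e)"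
    by (rule sum.reindex_bij_betw[OF gg_bij])
  also have "\<dots> = - L a e0" by (rule sum_rest[OF a])
  finally show ?thesis .
qed

lemma prod0:
  assumes a: "a \<in> UV" and b: "b \<in> UV"
  shows "psi0 (nprod (NG V E :: ('a, 'a set, 'f) nalg) a b) = nprod (T_alg (card E - 1)) (phi0 a) (phi0 b)"
proof
  fix j
  show "psi0 (nprod (NG V E :: ('a, 'a set, 'f) nalg) a b) j = nprod (T_alg (card E - 1)) (phi0 a) (phi0 b) j"
  proof (cases "j = 0")
    case True
    then show ?thesis unfolding T_nprod sq using phi0_sum[OF a] phi0_sum[OF b]
      by (simp add: psi0_def)
  next
    case False
    show ?thesis
    proof (cases "j \<in> {1..card E - 1}")
      case True
      then show ?thesis unfolding T_nprod sq using False by (simp add: psi0_def phi0_def)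
    next
      case False2: False
      then have "j \<notin> {0..card E - 1}" using False by auto
      then show ?thesis unfolding T_nprod sq using False False2 by (simp add: psi0_def)
    qed
  qed
qed

lemma phi0_L: assumes h: "L a = L b" shows "phi0 a = phi0 b"
  unfolding phi0_def h by (rule refl)

lemma phi0_eqD:
  assumes a: "a \<in> UV" and b: "b \<in> UV" and eq: "phi0 a = phi0 b"
  shows "L a = L b"
proof
  fix e
  show "L a e = L b e"
  proof (cases "e \<in> E")
    case False then show ?thesis by (simp add: L_out)
  next
    case True
    show ?thesis
    proof (cases "e = e0")
      case True
      have "- L a e0 = - L b e0" using phi0_sum[OF a] phi0_sum[OF b] eq by simp
      then show ?thesis using True by simp
    next
      case False
      then have e: "e \<in> E - {e0}" using \<open>e \<in> E\<close> by blast
      have i: "ginv e \<in> {1..card E - 1}" "gg (ginv e) = e" using ginv[OF e] by auto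
      have "phi0 a (ginv e) = phi0 b (ginv e)" using eq by simp
      then have "zz e * L a e = zz e * L b e" using i by (simp add: phi0_def)
      then show ?thesis using zz_nz \<open>e \<in> E\<close> by simp
    qed
  qed
qed

lemma phi0_UVT: "phi0 a \<in> Uvec (T_alg (card E - 1) :: (nat, nat, 'f) nalg)"
  by (simp add: Uvec_T phi0_def)

lemma phi0_surj:
  assumes c: "c \<in> Uvec (T_alg (card E - 1) :: (nat, nat, 'f) nalg)"
  shows "\<exists>a\<in>UV. phi0 a = c"
proof -
  define w where "w = (\<lambda>e. if e \<in> E - {e0} then c (ginv e) / zz e
     else if e = e0 then - (\<Sum>e'\<in>E - {e0}. c (ginv e')) else 0)"
  have wZ: "w \<in> ZV" using e0E by (simp add: w_def)
  have "(\<Sum>e\<in>E. zz e * w e) = zz e0 * w e0 + (\<Sum>e\<in>E - {e0}. zz e * w e)"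
    using e0E finE by (simp add: sum.remove)
  also have "(\<Sum>e\<in>E - {e0}. zz e * w e) = (\<Sum>e\<in>E - {e0}. c (ginv e))"
    by (rule sum.cong) (auto simp: w_def zz_nz)
  also have "zz e0 * w e0 = - (\<Sum>e'\<in>E - {e0}. c (ginv e'))" by (simp add: w_def zz_def)
  finally have ws: "(\<Sum>e\<in>E. zz e * w e) = 0" by simp
  have La: "L (pre w) = w" by (rule H_sub[OF wZ ws])
  have "phi0 (pre w) = c"
  proof
    fix i
    show "phi0 (pre w) i = c i"
    proof (cases "i \<in> {1..card E - 1}")
      case True
      have gi: "gg i \<in> E - {e0}" using gg_in[OF True] .
      then have "zz (gg i) \<noteq> 0" using zz_nz by blast
      have "phi0 (pre w) i = zz (gg i) * w (gg i)" using True by (simp add: phi0_def La)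
      also have "\<dots> = c i" using True gi \<open>zz (gg i) \<noteq> 0\<close> by (simp add: w_def ginv_gg)
      finally show ?thesis .
    next
      case False
      then have "phi0 (pre w) i = 0" unfolding phi0_def by (simp only: if_False)
      moreover have "c i = 0" using c False by (simp add: Uvec_T)
      ultimately show ?thesis by simp
    qed
  qed
  then show ?thesis using pre_UV by blast
qed

lemma psi0_bij: "bij_betw psi0 ZV (Zvec (T_alg (card E - 1) :: (nat, nat, 'f) nalg))"
proof (rule bij_betw_byWitness[where f' = "\<lambda>c e. if e = e0 then c 0 else if e \<in> E - {e0} then c (ginv e) / (zz e * zz e) else 0"])
  show "\<forall>w\<in>ZV. (\<lambda>e. if e = e0 then psi0 w 0 else if e \<in> E - {e0} then psi0 w (ginv e) / (zz e * zz e) else 0) = w"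
  proof
    fix w assume w: "w \<in> ZV"
    show "(\<lambda>e. if e = e0 then psi0 w 0 else if e \<in> E - {e0} then psi0 w (ginv e) / (zz e * zz e) else 0) = w"
    proof
      fix e
      show "(if e = e0 then psi0 w 0 else if e \<in> E - {e0} then psi0 w (ginv e) / (zz e * zz e) else 0) = w e"
      proof (cases "e \<in> E - {e0}")
        case True
        have i: "ginv e \<in> {1..card E - 1}" "gg (ginv e) = e" using ginv[OF True] by auto
        have "ginv e \<noteq> 0" using i by auto
        moreover have "zz e \<noteq> 0" using True zz_nz by blast
        ultimately show ?thesis using True i by (simp add: psi0_def)
      next
        case False
        then show ?thesis using w by (auto simp: psi0_def)
      qed
    qed
  qed
  show "\<forall>c\<in>Zvec (T_alg (card E - 1) :: (nat, nat, 'f) nalg). psi0 (\<lambda>e. if e = e0 then c 0 else if e \<in> E - {e0} then c (ginv e) / (zz e * zz e) else 0) = c"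
  proof
    fix c assume c: "c \<in> Zvec (T_alg (card E - 1) :: (nat, nat, 'f) nalg)"
    show "psi0 (\<lambda>e. if e = e0 then c 0 else if e \<in> E - {e0} then c (ginv e) / (zz e * zz e) else 0) = c"
    proof
      fix j
      show "psi0 (\<lambda>e. if e = e0 then c 0 else if e \<in> E - {e0} then c (ginv e) / (zz e * zz e) else 0) j = c j"
      proof (cases "j \<in> {1..card E - 1}")
        case True
        have gi: "gg j \<in> E - {e0}" using gg_in[OF True] .
        then have "zz (gg j) \<noteq> 0" using zz_nz by blast
        moreover have "j \<noteq> 0" using True by auto
        ultimately show ?thesis using True gi by (simp add: psi0_def ginv_gg)
      next
        case False
        then show ?thesis using c by (auto simp: psi0_def Zvec_T)
      qed
    qed
  qed
  show "psi0 ` ZV \<subseteq> Zvec (T_alg (card E - 1) :: (nat, nat, 'f) nalg)"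
    by (auto simp: psi0_def Zvec_T)
  show "(\<lambda>c e. if e = e0 then c 0 else if e \<in> E - {e0} then c (ginv e) / (zz e * zz e) else 0) `
      Zvec (T_alg (card E - 1) :: (nat, nat, 'f) nalg) \<subseteq> ZV"
    using e0E by auto
qed

lemma lin_phi0: "linear_on UV phi0"
  unfolding linear_on_def by (auto simp: phi0_def lf_add' lf_scl' fun_eq_iff algebra_simps)

lemma lin_psi0: "linear_on ZV psi0"
  unfolding linear_on_def by (auto simp: psi0_def fun_eq_iff algebra_simps)

end

context ctx begin

lemma isoA:
  assumes kA: "\<forall>a\<in>UV. L a = 0 \<longrightarrow> a = 0"
  shows "nalg_iso (NG V E :: ('a, 'a set, 'f) nalg) (T_alg (card V) :: (nat, nat, 'f) nalg)"
proof -
  have N: "card V = card E - 1" using caseA_card[OF kA] by simp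
  have bphi: "bij_betw phi0 UV (Uvec (T_alg (card E - 1) :: (nat, nat, 'f) nalg))"
  proof (rule bij_betw_imageI)
    show "inj_on phi0 UV"
    proof
      fix a b assume a: "a \<in> UV" and b: "b \<in> UV" and eq: "phi0 a = phi0 b"
      have "L (a - b) = 0" using phi0_eqD[OF a b eq] by (simp add: lf_diff)
      moreover have "a - b \<in> UV" using a b by simp
      ultimately have "a - b = 0" using kA by blast
      then show "a = b" by simp
    qed
    show "phi0 ` UV = Uvec (T_alg (card E - 1) :: (nat, nat, 'f) nalg)"
      using phi0_UVT phi0_surj by blast
  qed
  show ?thesis
    unfolding nalg_iso_def Uvec_NG Zvec_NG N
    using lin_phi0 lin_psi0 bphi psi0_bij prod0 by blast
qed

lemma isoB:
  assumes s: "s \<in> UV" "s \<noteq> 0" "L s = 0"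
  shows "nalg_iso (NG V E :: ('a, 'a set, 'f) nalg)
     (nalg_sum (F0 :: (unit, nat, 'f) nalg) (T_alg (card V - 1) :: (nat, nat, 'f) nalg))"
proof -
  have N: "card V - 1 = card E - 1" using caseB_card[OF s] by simp
  obtain x0 where x0: "x0 \<in> V" using V_two by blast
  have sx0: "s x0 \<noteq> 0" using s_nz[OF s(1,3,2) x0] .
  define Phi :: "('a \<Rightarrow> 'f) \<Rightarrow> unit + nat \<Rightarrow> 'f" where
    "Phi a = (\<lambda>x. case x of Inl _ \<Rightarrow> a x0 | Inr i \<Rightarrow> phi0 a i)" for a
  define Psi :: "('a set \<Rightarrow> 'f) \<Rightarrow> nat + nat \<Rightarrow> 'f" where
    "Psi w = (\<lambda>y. case y of Inl _ \<Rightarrow> 0 | Inr j \<Rightarrow> psi0 w j)" for w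
  have PhiInr: "Phi a \<circ> Inr = phi0 a" for a by (simp add: Phi_def fun_eq_iff)
  have linPhi: "linear_on UV Phi"
    unfolding linear_on_def
  proof (intro conjI ballI allI)
    fix u v assume u: "u \<in> UV" and v: "v \<in> UV"
    have h: "phi0 (\<lambda>i. u i + v i) = (\<lambda>i. phi0 u i + phi0 v i)"
      using lin_phi0 u v unfolding linear_on_def by blast
    show "Phi (\<lambda>i. u i + v i) = (\<lambda>i. Phi u i + Phi v i)"
    proof
      fix x show "Phi (\<lambda>i. u i + v i) x = Phi u x + Phi v x"
        using fun_cong[OF h] by (cases x) (simp_all add: Phi_def)
    qed
  next
    fix c u assume u: "u \<in> UV"
    have h: "phi0 (\<lambda>i. c * u i) = (\<lambda>i. c * phi0 u i)"
      using lin_phi0 u unfolding linear_on_def by blast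
    show "Phi (\<lambda>i. c * u i) = (\<lambda>i. c * Phi u i)"
    proof
      fix x show "Phi (\<lambda>i. c * u i) x = c * Phi u x"
        using fun_cong[OF h] by (cases x) (simp_all add: Phi_def)
    qed
  qed
  have linPsi: "linear_on ZV Psi"
    unfolding linear_on_def
  proof (intro conjI ballI allI)
    fix u v assume u: "u \<in> ZV" and v: "v \<in> ZV"
    have h: "psi0 (\<lambda>i. u i + v i) = (\<lambda>i. psi0 u i + psi0 v i)"
      using lin_psi0 u v unfolding linear_on_def by blast
    show "Psi (\<lambda>i. u i + v i) = (\<lambda>i. Psi u i + Psi v i)"
    proof
      fix x show "Psi (\<lambda>i. u i + v i) x = Psi u x + Psi v x"
        using fun_cong[OF h] by (cases x) (simp_all add: Psi_def)
    qed
  next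
    fix c u assume u: "u \<in> ZV"
    have h: "psi0 (\<lambda>i. c * u i) = (\<lambda>i. c * psi0 u i)"
      using lin_psi0 u unfolding linear_on_def by blast
    show "Psi (\<lambda>i. c * u i) = (\<lambda>i. c * Psi u i)"
    proof
      fix x show "Psi (\<lambda>i. c * u i) x = c * Psi u x"
        using fun_cong[OF h] by (cases x) (simp_all add: Psi_def)
    qed
  qed
  have bPhi: "bij_betw Phi UV (Uvec (nalg_sum (F0 :: (unit, nat, 'f) nalg) (T_alg (card E - 1) :: (nat, nat, 'f) nalg)))"
  proof (rule bij_betw_imageI)
    show "inj_on Phi UV"
    proof
      fix a b assume a: "a \<in> UV" and b: "b \<in> UV" and eq: "Phi a = Phi b"
      have "Phi a \<circ> Inr = Phi b \<circ> Inr" using eq by simp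
      then have "phi0 a = phi0 b" unfolding PhiInr .
      then have "L (a - b) = 0" using phi0_eqD[OF a b] by (simp add: lf_diff)
      moreover have "a - b \<in> UV" using a b by simp
      moreover have "a x0 = b x0" using fun_cong[OF eq, of "Inl ()"] by (simp add: Phi_def)
      then have "(a - b) x0 = 0" by simp
      ultimately have "a - b = 0" using ker_zero[OF _ _ x0, of "a - b"] by blast
      then show "a = b" by simp
    qed
    show "Phi ` UV = Uvec (nalg_sum (F0 :: (unit, nat, 'f) nalg) (T_alg (card E - 1) :: (nat, nat, 'f) nalg))"
    proof
      show "Phi ` UV \<subseteq> Uvec (nalg_sum (F0 :: (unit, nat, 'f) nalg) (T_alg (card E - 1) :: (nat, nat, 'f) nalg))"
        unfolding Uvec_sum by (auto simp: Phi_def phi0_def)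
      show "Uvec (nalg_sum (F0 :: (unit, nat, 'f) nalg) (T_alg (card E - 1) :: (nat, nat, 'f) nalg)) \<subseteq> Phi ` UV"
      proof
        fix c assume c: "c \<in> Uvec (nalg_sum (F0 :: (unit, nat, 'f) nalg) (T_alg (card E - 1) :: (nat, nat, 'f) nalg))"
        have "c \<circ> Inr \<in> Uvec (T_alg (card E - 1) :: (nat, nat, 'f) nalg)"
          using c unfolding Uvec_sum Uvec_T by simp
        then obtain a where a: "a \<in> UV" "phi0 a = c \<circ> Inr" using phi0_surj by blast
        define a' where "a' = a + scl ((c (Inl ()) - a x0) / s x0) s"
        have a'U: "a' \<in> UV" using a s by (simp add: a'_def)
        have "L a' = L a + scl ((c (Inl ()) - a x0) / s x0) (L s)" unfolding a'_def by (simp only: lf_add lf_scl)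
        also have "scl ((c (Inl ()) - a x0) / s x0) (L s) = 0" using s(3) by (simp add: fun_eq_iff)
        finally have "L a' = L a" by simp
        then have p: "phi0 a' = c \<circ> Inr" using phi0_L[of a' a] a(2) by simp
        have x: "a' x0 = c (Inl ())" using sx0 by (simp add: a'_def)
        have "Phi a' = c"
        proof
          fix x show "Phi a' x = c x"
          proof (cases x)
            case (Inl u) then show ?thesis using x by (simp add: Phi_def)
          next
            case (Inr i) then show ?thesis using fun_cong[OF p, of i] by (simp add: Phi_def)
          qed
        qed
        then show "c \<in> Phi ` UV" using a'U by blast
      qed
    qed
  qed
  have bPsi: "bij_betw Psi ZV (Zvec (nalg_sum (F0 :: (unit, nat, 'f) nalg) (T_alg (card E - 1) :: (nat, nat, 'f) nalg)))"
  proof (rule bij_betw_imageI)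
    show "inj_on Psi ZV"
    proof
      fix a b assume a: "a \<in> ZV" and b: "b \<in> ZV" and eq: "Psi a = Psi b"
      have "psi0 a = psi0 b"
      proof
        fix j show "psi0 a j = psi0 b j" using fun_cong[OF eq, of "Inr j"] by (simp add: Psi_def)
      qed
      moreover have "inj_on psi0 ZV" using psi0_bij by (simp add: bij_betw_def)
      ultimately show "a = b" using a b by (simp add: inj_on_def)
    qed
    show "Psi ` ZV = Zvec (nalg_sum (F0 :: (unit, nat, 'f) nalg) (T_alg (card E - 1) :: (nat, nat, 'f) nalg))"
    proof
      show "Psi ` ZV \<subseteq> Zvec (nalg_sum (F0 :: (unit, nat, 'f) nalg) (T_alg (card E - 1) :: (nat, nat, 'f) nalg))"
      proof
        fix y assume "y \<in> Psi ` ZV"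
        then obtain w where w: "w \<in> ZV" "y = Psi w" by blast
        have pw: "psi0 w \<in> Zvec (T_alg (card E - 1) :: (nat, nat, 'f) nalg)"
          using bij_betwE[OF psi0_bij] w(1) by blast
        have "\<forall>i. i \<notin> {0..card E - 1} \<longrightarrow> psi0 w i = 0" using pw unfolding Zvec_T by simp
        then show "y \<in> Zvec (nalg_sum (F0 :: (unit, nat, 'f) nalg) (T_alg (card E - 1) :: (nat, nat, 'f) nalg))"
          unfolding Zvec_sum w(2) by (simp add: Psi_def)
      qed
      show "Zvec (nalg_sum (F0 :: (unit, nat, 'f) nalg) (T_alg (card E - 1) :: (nat, nat, 'f) nalg)) \<subseteq> Psi ` ZV"
      proof
        fix c assume c: "c \<in> Zvec (nalg_sum (F0 :: (unit, nat, 'f) nalg) (T_alg (card E - 1) :: (nat, nat, 'f) nalg))"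
        have cz: "\<forall>i. i \<notin> {0..card E - 1} \<longrightarrow> c (Inr i) = 0" using c unfolding Zvec_sum by blast
        have "c \<circ> Inr \<in> Zvec (T_alg (card E - 1) :: (nat, nat, 'f) nalg)"
          unfolding Zvec_T using cz by simp
        then have "c \<circ> Inr \<in> psi0 ` ZV" unfolding bij_betw_imp_surj_on[OF psi0_bij] .
        then obtain w where w1: "w \<in> ZV" and w2': "c \<circ> Inr = psi0 w" by (rule imageE)
        note w = w1 w2'[symmetric]
        have "Psi w = c"
        proof
          fix y show "Psi w y = c y"
          proof (cases y)
            case (Inl u)
            have "c (Inl u) = 0" using c unfolding Zvec_sum by simp
            then show ?thesis using Inl by (simp add: Psi_def)
          next
            case (Inr i) then show ?thesis using fun_cong[OF w(2), of i] by (simp add: Psi_def)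
          qed
        qed
        then show "c \<in> Psi ` ZV" using w(1) by blast
      qed
    qed
  qed
  have prod: "\<forall>u\<in>UV. \<forall>v\<in>UV. Psi (nprod (NG V E :: ('a, 'a set, 'f) nalg) u v) =
      nprod (nalg_sum (F0 :: (unit, nat, 'f) nalg) (T_alg (card E - 1) :: (nat, nat, 'f) nalg)) (Phi u) (Phi v)"
  proof (intro ballI)
    fix u v assume u: "u \<in> UV" and v: "v \<in> UV"
    show "Psi (nprod (NG V E :: ('a, 'a set, 'f) nalg) u v) =
      nprod (nalg_sum (F0 :: (unit, nat, 'f) nalg) (T_alg (card E - 1) :: (nat, nat, 'f) nalg)) (Phi u) (Phi v)"
    proof
      fix y
      show "Psi (nprod (NG V E :: ('a, 'a set, 'f) nalg) u v) y =
        nprod (nalg_sum (F0 :: (unit, nat, 'f) nalg) (T_alg (card E - 1) :: (nat, nat, 'f) nalg)) (Phi u) (Phi v) y"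
      proof (cases y)
        case (Inl a) then show ?thesis by (simp add: nprod_sum Psi_def)
      next
        case (Inr j)
        then show ?thesis using fun_cong[OF prod0[OF u v], of j]
          by (simp add: nprod_sum Psi_def PhiInr)
      qed
    qed
  qed
  show ?thesis
    unfolding nalg_iso_def Uvec_NG Zvec_NG N
    using linPhi linPsi bPhi bPsi prod by blast
qed

end

theorem theorem7p2:
  fixes V :: "'a set" and E :: "'a set set"
  assumes graph: "simple_graph V E"
    and conn: "connected_graph V E"
    and char: "(2::'f::field) \<noteq> 0"
    and pairs: "\<forall>e1\<in>E. \<forall>e2\<in>E. e1 \<noteq> e2 \<longrightarrow>
        (\<exists>u \<in> Uvec (NG V E :: ('a, 'a set, 'f) nalg).
            zsupport E (nprod (NG V E :: ('a, 'a set, 'f) nalg) u u) = {e1, e2})"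
    and not_sq: "\<not> edge_square V E TYPE('f)"
  shows "card V \<ge> 4 \<and> (card E = card V \<or> card E = card V + 1) \<and>
    (card E = card V \<longrightarrow> is_even_cycle V E \<and>
        nalg_iso (NG V E :: ('a, 'a set, 'f) nalg) (nalg_sum (F0 :: (unit, nat, 'f) nalg) (T_alg (card V - 1)))) \<and>
    (card E = card V + 1 \<longrightarrow>
        nalg_iso (NG V E :: ('a, 'a set, 'f) nalg) (T_alg (card V) :: (nat, nat, 'f) nalg))"
proof -
  interpret ctx V E "TYPE('f)"
    by unfold_locales (rule graph, rule conn, rule char, rule pairs, rule not_sq)
  show ?thesis
  proof (cases "\<forall>a\<in>UV. L a = 0 \<longrightarrow> a = 0")
    case True
    have c: "card E = card V + 1" using caseA_card[OF True] .
    show ?thesis using c caseA_ge4[OF c] isoA[OF True] by simp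
  next
    case False
    then obtain s where s: "s \<in> UV" "L s = 0" "s \<noteq> 0" by blast
    have c: "card E = card V" using caseB_card[OF s(1,3,2)] .
    show ?thesis using c caseB_cycle[OF s(1,3,2)] isoB[OF s(1,3,2)] by simp
  qed
qed

end
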